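(* Let $\varrho=\{\varrho_{t,T}\}_{t\in[0,T]}$ be a dynamic risk measure which is stochastically conditionally time-consistent, normalized, and translation invariant. Then $\varrho$ is time consistent, i.e. $\varrho_{t,T}(Z_T)=\varrho_{t,T}\big(\varrho_{r,T}(Z_T)\big)$ for all $0\le t\le r\le T$ and all $Z_T\in\mathcal Z_T$, and $\varrho$ has the local property, i.e. $\varrho_{t,T}(\mathbf 1_A Z_T)=\mathbf 1_A\,\varrho_{t,T}(Z_T)$ for all $t\in[0,T]$, $Z_T\in\mathcal Z_T$ and $A\in\mathcal F_t$.
   Context: Let $\mathcal X$ be a finite state space, $T>0$, and $\{X_t\}_{0\le t\le T}$ a continuous-time Markov chain with values in $\mathcal X$, starting at a fixed state $x_0$, with transition function $Q_{t,r}(y|x)=P(X_r=y\mid X_t=x)$, $0\le t<r\le T$, $x,y\in\mathcal X$. The transition rates $G_t(y|x)=\lim_{\tau\downarrow0}\frac1\tau[Q_{t,t+\tau}(y|x)-\delta_x(y)]$ are assumed to exist, be finite and be uniformly bounded over $t\in[0,T]$ ($\delta_x(y)=1$ if $y=x$, $0$ otherwise). For $0\le t<r\le T$ and $\xi\in\mathcal X$, $\Xi^{\xi}_{t,r}$ denotes the space of piecewise-constant right-continuous paths $[t,r]\to\mathcal X$ starting at $\xi$ (with the $\sigma$-algebra generated by finite-dimensional cylinders), $P^{\xi}_{t,r}$ the law on it of the chain started at $\xi$ at time $t$, and $\Xi_{0,t}=\bigcup_{\xi}\Xi^{\xi}_{0,t}$. $\{\mathcal F_t\}$ is the filtration generated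 by $X$, and $\mathcal Z_t$ is the space of bounded $\mathcal F_t$-measurable random variables, each identified with a measurable functional of the path $\xi_{[0,t]}$. A conditional risk measure is a mapping $\varrho_{t,T}:\mathcal Z_T\to\mathcal Z_t$; a dynamic risk measure is a family $\varrho=\{\varrho_{t,T}\}_{t\in[0,T]}$ of them. It is normalized if $\varrho_{t,T}(0)=0$ for all $t$; translation invariant if $\varrho_{t,T}(Z_t+Z_T)=Z_t+\varrho_{t,T}(Z_T)$ for all $Z_t\in\mathcal Z_t$, $Z_T\in\mathcal Z_T$, $t\in[0,T]$. For a fixed history $\xi_{[0,t]}\in\Xi_{0,t}$ and $r\in[t,T]$, $\varrho_{r,T}(Z_T)\mid\xi_{[0,t]}$ denotes the random variable $\varrho_{r,T}(Z_T)$ regarded as a function of the path on $[t,r]$ that continues $\xi_{[0,t]}$, with the distribution induced by $P^{\xi_t}_{t,r}$; $\varrho_{t,T}(Z_T)(\xi_{[0,t]})$ denotes the value of $\varrho_{t,T}(Z_T)$ at the history $\xi_{[0,t]}$. For random variables $U,V$ (possibly on different probability spaces), $U\preceq_{\rm st}V$ means $P(U>\eta)\le P(V>\eta)$ for all $\eta\in\mathbb R$. The dynamic risk measure $\varrho$ is stochastically conditionally time-consistent if for all $0\le t\le r\le T$, all $\xi_{[0,t]}\in\Xi_{0,t}$ and all $Z_T,W_T\in\mathcal Z_T$, the relation $\varrho_{r,T}(Z_T)\mid\xi_{[0,t]}\preceq_{\rm st}\varrho_{r,T}(W_T)\mid\xi_{[0,t]}$ implies $\varrho_{t,T}(Z_T)(\xi_{[0,t]})\le\varrho_{t,T}(W_T)(\xi_{[0,t]})$.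 *)

theory Defs
  imports "HOL-Probability.Probability"
begin

text \<open>A path on [t,r] is represented as a function real => state which is
 constant (= its value at t) before t and constant (= its value at r) after r;
 on [t,r] it is piecewise constant, right-continuous, with finitely many jumps.\<close>

definition pc_paths :: "real \<Rightarrow> real \<Rightarrow> (real \<Rightarrow> 'x) set" where
  "pc_paths t r =
    {\<omega>. (\<forall>s. \<omega> s = \<omega> (max t (min s r))) \<and>
         (\<exists>J. finite J \<and> J \<subseteq> {t<..r} \<and>
              (\<forall>s\<in>{t..r}. \<omega> s = \<omega> (Max (insert t {j\<in>J. j \<le> s}))))}"

definition path_space :: "real \<Rightarrow> real \<Rightarrow> 'x \<Rightarrow> (real \<Rightarrow> 'x) set" where
  "path_space t r \<xi> = {\<omega> \<in> pc_paths t r. \<omega> t = \<xi>}"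

definition cyl_sets :: "(real \<Rightarrow> 'x) set \<Rightarrow> real \<Rightarrow> real \<Rightarrow> (real \<Rightarrow> 'x) set set" where
  "cyl_sets S a b = {{\<omega> \<in> S. \<omega> s = y} | s y. s \<in> {a..b}}"

definition path_measure :: "real \<Rightarrow> real \<Rightarrow> 'x \<Rightarrow> (real \<Rightarrow> 'x) measure" where
  "path_measure t r \<xi> = sigma (path_space t r \<xi>) (cyl_sets (path_space t r \<xi>) t r)"

definition filt :: "real \<Rightarrow> real \<Rightarrow> (real \<Rightarrow> 'x) measure" where
  "filt T t = sigma (pc_paths 0 T) (cyl_sets (pc_paths 0 T) 0 t)"

definition Zspace :: "real \<Rightarrow> real \<Rightarrow> ((real \<Rightarrow> 'x) \<Rightarrow> real) set" where
  "Zspace T t = {Z. Z \<in> borel_measurable (filt T t) \<and> (\<exists>B. \<forall>\<omega>. \<bar>Z \<omega>\<bar> \<le> B) \<and>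
                    (\<forall>\<omega>. \<omega> \<notin> pc_paths 0 T \<longrightarrow> Z \<omega> = 0)}"

text \<open>Q t r x y stands for Q_{t,r}(y|x).\<close>
definition transition_function :: "real \<Rightarrow> (real \<Rightarrow> real \<Rightarrow> 'x::finite \<Rightarrow> 'x \<Rightarrow> real) \<Rightarrow> bool" where
  "transition_function T Q \<longleftrightarrow>
     (\<forall>t r x. 0 \<le> t \<longrightarrow> t \<le> r \<longrightarrow> r \<le> T \<longrightarrow>
         (\<forall>y. Q t r x y \<ge> 0) \<and> (\<Sum>y\<in>UNIV. Q t r x y) = 1) \<and>
     (\<forall>t x y. 0 \<le> t \<longrightarrow> t \<le> T \<longrightarrow> Q t t x y = (if y = x then 1 else 0)) \<and>
     (\<forall>t s r x z. 0 \<le> t \<longrightarrow> t \<le> s \<longrightarrow> s \<le> r \<longrightarrow> r \<le> T \<longrightarrow>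
         Q t r x z = (\<Sum>y\<in>UNIV. Q t s x y * Q s r y z))"

definition bounded_rates :: "real \<Rightarrow> (real \<Rightarrow> real \<Rightarrow> 'x \<Rightarrow> 'x \<Rightarrow> real) \<Rightarrow> bool" where
  "bounded_rates T Q \<longleftrightarrow>
     (\<exists>G B. \<forall>t\<in>{0..<T}. \<forall>x y.
        ((\<lambda>\<tau>. (Q t (t + \<tau>) x y - (if y = x then 1 else 0)) / \<tau>) \<longlongrightarrow> G t x y) (at_right 0)
        \<and> \<bar>G t x y\<bar> \<le> B)"

fun fdd_prob :: "(real \<Rightarrow> real \<Rightarrow> 'x \<Rightarrow> 'x \<Rightarrow> real) \<Rightarrow> real \<Rightarrow> 'x \<Rightarrow> real list \<Rightarrow> 'x list \<Rightarrow> real" where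
  "fdd_prob Q t x (s # ss) (y # ys) = Q t s x y * fdd_prob Q s y ss ys"
| "fdd_prob Q t x _ _ = 1"

text \<open>P t r xi is the law P^xi_{t,r} of the chain started at xi at time t, on the
 path space over [t,r].\<close>
definition chain_law ::
  "real \<Rightarrow> (real \<Rightarrow> real \<Rightarrow> 'x \<Rightarrow> 'x \<Rightarrow> real) \<Rightarrow> (real \<Rightarrow> real \<Rightarrow> 'x \<Rightarrow> (real \<Rightarrow> 'x) measure) \<Rightarrow> bool" where
  "chain_law T Q P \<longleftrightarrow>
     (\<forall>t r \<xi>. 0 \<le> t \<longrightarrow> t \<le> r \<longrightarrow> r \<le> T \<longrightarrow>
        prob_space (P t r \<xi>) \<and>
        space (P t r \<xi>) = path_space t r \<xi> \<and>
        sets (P t r \<xi>) = sets (path_measure t r \<xi>) \<and>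
        (\<forall>ss ys. sorted ss \<longrightarrow> set ss \<subseteq> {t..r} \<longrightarrow> length ys = length ss \<longrightarrow>
           measure (P t r \<xi>) {\<omega> \<in> path_space t r \<xi>. list_all2 (\<lambda>s y. \<omega> s = y) ss ys}
             = fdd_prob Q t \<xi> ss ys))"

definition dyn_risk_measure ::
  "real \<Rightarrow> (real \<Rightarrow> ((real \<Rightarrow> 'x) \<Rightarrow> real) \<Rightarrow> ((real \<Rightarrow> 'x) \<Rightarrow> real)) \<Rightarrow> bool" where
  "dyn_risk_measure T \<rho> \<longleftrightarrow> (\<forall>t\<in>{0..T}. \<forall>Z\<in>Zspace T T. \<rho> t Z \<in> Zspace T t)"

definition normalized :: "real \<Rightarrow> (real \<Rightarrow> ((real \<Rightarrow> 'x) \<Rightarrow> real) \<Rightarrow> ((real \<Rightarrow> 'x) \<Rightarrow> real)) \<Rightarrow> bool" where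
  "normalized T \<rho> \<longleftrightarrow> (\<forall>t\<in>{0..T}. \<rho> t (\<lambda>_. 0) = (\<lambda>_. 0))"

definition translation_invariant ::
  "real \<Rightarrow> (real \<Rightarrow> ((real \<Rightarrow> 'x) \<Rightarrow> real) \<Rightarrow> ((real \<Rightarrow> 'x) \<Rightarrow> real)) \<Rightarrow> bool" where
  "translation_invariant T \<rho> \<longleftrightarrow>
     (\<forall>t\<in>{0..T}. \<forall>Zt\<in>Zspace T t. \<forall>ZT\<in>Zspace T T.
        \<rho> t (\<lambda>\<omega>. Zt \<omega> + ZT \<omega>) = (\<lambda>\<omega>. Zt \<omega> + \<rho> t ZT \<omega>))"

definition st_le :: "'a measure \<Rightarrow> ('a \<Rightarrow> real) \<Rightarrow> 'b measure \<Rightarrow> ('b \<Rightarrow> real) \<Rightarrow> bool" where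
  "st_le M U N V \<longleftrightarrow>
     (\<forall>\<eta>::real. measure M {x \<in> space M. U x > \<eta>} \<le> measure N {y \<in> space N. V y > \<eta>})"

text \<open>Continuation of the history omega on [0,t] by the path eta on [t,r].\<close>
definition glue :: "real \<Rightarrow> (real \<Rightarrow> 'x) \<Rightarrow> (real \<Rightarrow> 'x) \<Rightarrow> (real \<Rightarrow> 'x)" where
  "glue t \<omega> \<eta> = (\<lambda>s. if s < t then \<omega> s else \<eta> s)"

text \<open>Stochastic conditional time consistency.  A history xi_[0,t] in Xi_{0,t} is
 represented by any omega in Xi_{0,T} whose restriction to [0,t] is xi_[0,t].\<close>
definition stoch_cond_time_consistent ::
  "real \<Rightarrow> (real \<Rightarrow> real \<Rightarrow> 'x \<Rightarrow> (real \<Rightarrow> 'x) measure) \<Rightarrow>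
   (real \<Rightarrow> ((real \<Rightarrow> 'x) \<Rightarrow> real) \<Rightarrow> ((real \<Rightarrow> 'x) \<Rightarrow> real)) \<Rightarrow> bool" where
  "stoch_cond_time_consistent T P \<rho> \<longleftrightarrow>
     (\<forall>t r. 0 \<le> t \<longrightarrow> t \<le> r \<longrightarrow> r \<le> T \<longrightarrow>
       (\<forall>\<omega>\<in>pc_paths 0 T. \<forall>Z\<in>Zspace T T. \<forall>W\<in>Zspace T T.
          st_le (P t r (\<omega> t)) (\<lambda>\<eta>. \<rho> r Z (glue t \<omega> \<eta>))
                (P t r (\<omega> t)) (\<lambda>\<eta>. \<rho> r W (glue t \<omega> \<eta>))
          \<longrightarrow> \<rho> t Z \<omega> \<le> \<rho> t W \<omega>))"

end

theory Submission
  imports Defs "HOL-Probability.Conditional_Expectation"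
begin

lemma cyl_sub: "cyl_sets S a b \<subseteq> Pow S"
  unfolding cyl_sets_def by auto

lemma sets_filt: "sets (filt T t) = sigma_sets (pc_paths 0 T) (cyl_sets (pc_paths 0 T) 0 t)"
  unfolding filt_def by (rule sets_measure_of[OF cyl_sub])

lemma space_filt: "space (filt T t) = pc_paths 0 T"
  unfolding filt_def by (rule space_measure_of[OF cyl_sub])

lemma filt_sub:
  assumes "t \<le> T"
  shows "subalgebra (filt T T) (filt T t)"
  unfolding subalgebra_def space_filt sets_filt
proof (intro conjI refl sigma_sets_mono')
  show "cyl_sets (pc_paths 0 T) 0 t \<subseteq> cyl_sets (pc_paths 0 T) 0 T"
    using assms unfolding cyl_sets_def by fastforce
qed

lemma Zspace_mono:
  assumes "t \<le> T" "Z \<in> Zspace T t" shows "Z \<in> Zspace T T"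
  using assms measurable_from_subalg[OF filt_sub[OF assms(1)]] unfolding Zspace_def by blast

lemma zero_Z: "(\<lambda>_. 0) \<in> Zspace T t"
  unfolding Zspace_def by auto

lemma filt_local:
  assumes "A \<in> sets (filt T t)" "\<omega> \<in> pc_paths 0 T" "\<omega>' \<in> pc_paths 0 T"
    "\<forall>s\<in>{0..t}. \<omega> s = \<omega>' s"
  shows "\<omega> \<in> A \<longleftrightarrow> \<omega>' \<in> A"
  using assms(1) unfolding sets_filt
proof (induction rule: sigma_sets.induct)
  case (Basic a)
  then show ?case using assms(2-4) unfolding cyl_sets_def by auto
next
  case Empty
  then show ?case by simp
next
  case (Compl a)
  then show ?case using assms(2,3) by auto
next
  case (Union a)
  then show ?case by auto
qed

lemma st_le_eq:
  assumes "\<And>x. x \<in> space M \<Longrightarrow> U x = V x"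
  shows "st_le M U M V"
proof -
  have "\<And>e. {x \<in> space M. U x > e} = {x \<in> space M. V x > e}" using assms by auto
  then show ?thesis unfolding st_le_def by simp
qed

theorem theorem3p2:
  fixes T :: real
    and Q :: "real \<Rightarrow> real \<Rightarrow> 'x::finite \<Rightarrow> 'x \<Rightarrow> real"
    and P :: "real \<Rightarrow> real \<Rightarrow> 'x \<Rightarrow> (real \<Rightarrow> 'x) measure"
    and \<rho> :: "real \<Rightarrow> ((real \<Rightarrow> 'x) \<Rightarrow> real) \<Rightarrow> ((real \<Rightarrow> 'x) \<Rightarrow> real)"
  assumes "T > 0"
    and "transition_function T Q"
    and "bounded_rates T Q"
    and "chain_law T Q P"
    and "dyn_risk_measure T \<rho>"
    and "stoch_cond_time_consistent T P \<rho>"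
    and "normalized T \<rho>"
    and "translation_invariant T \<rho>"
  shows "(\<forall>t r Z. 0 \<le> t \<longrightarrow> t \<le> r \<longrightarrow> r \<le> T \<longrightarrow> Z \<in> Zspace T T \<longrightarrow>
            \<rho> t Z = \<rho> t (\<rho> r Z))
       \<and> (\<forall>t Z A. t \<in> {0..T} \<longrightarrow> Z \<in> Zspace T T \<longrightarrow> A \<in> sets (filt T t) \<longrightarrow>
            \<rho> t (\<lambda>\<omega>. indicator A \<omega> * Z \<omega>) = (\<lambda>\<omega>. indicator A \<omega> * \<rho> t Z \<omega>))"
proof -
  note dyn = assms(5)[unfolded dyn_risk_measure_def]
  note sc = assms(6)[unfolded stoch_cond_time_consistent_def]
  note nm = assms(7)[unfolded normalized_def]
  note ti = assms(8)[unfolded translation_invariant_def]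
  have idem: "\<rho> r (\<rho> r Z) = \<rho> r Z" if "r \<in> {0..T}" "Z \<in> Zspace T T" for r Z
  proof -
    have Zr: "\<rho> r Z \<in> Zspace T r" using dyn that by blast
    have "\<rho> r (\<lambda>\<omega>. \<rho> r Z \<omega> + 0) = (\<lambda>\<omega>. \<rho> r Z \<omega> + \<rho> r (\<lambda>_. 0) \<omega>)"
      using ti[rule_format, OF that(1) Zr zero_Z[of T T]] by simp
    then show ?thesis using nm that by simp
  qed
  have idT: "\<rho> T Y = Y" if "Y \<in> Zspace T T" for Y
  proof -
    have "\<rho> T (\<lambda>\<omega>. Y \<omega> + 0) = (\<lambda>\<omega>. Y \<omega> + \<rho> T (\<lambda>_. 0) \<omega>)"
      using ti[rule_format, of T Y "\<lambda>_. 0"] that zero_Z[of T T] assms(1) by simp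
    then show ?thesis using nm assms(1) by simp
  qed
  have zero_out: "\<rho> t Y \<omega> = 0" if "t \<in> {0..T}" "Y \<in> Zspace T T" "\<omega> \<notin> pc_paths 0 T" for t Y \<omega>
    using dyn that unfolding Zspace_def by blast
  have part1: "\<rho> t Z = \<rho> t (\<rho> r Z)"
    if "0 \<le> t" "t \<le> r" "r \<le> T" "Z \<in> Zspace T T" for t r Z
  proof
    fix \<omega>
    have W: "\<rho> r Z \<in> Zspace T T" using dyn that Zspace_mono[of r T] by (meson atLeastAtMost_iff order_trans)
    have ii: "\<rho> r (\<rho> r Z) = \<rho> r Z" using idem that by auto
    show "\<rho> t Z \<omega> = \<rho> t (\<rho> r Z) \<omega>"
    proof (cases "\<omega> \<in> pc_paths 0 T")
      case False
      then show ?thesis using zero_out that W by auto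
    next
      case True
      have a: "\<rho> t Z \<omega> \<le> \<rho> t (\<rho> r Z) \<omega>"
        using sc that True W by (metis ii st_le_eq)
      have b: "\<rho> t (\<rho> r Z) \<omega> \<le> \<rho> t Z \<omega>"
        using sc that True W by (metis ii st_le_eq)
      show ?thesis using a b by simp
    qed
  qed
  have part2: "\<rho> t (\<lambda>\<omega>. indicator A \<omega> * Z \<omega>) = (\<lambda>\<omega>. indicator A \<omega> * \<rho> t Z \<omega>)"
    if t: "t \<in> {0..T}" and Z: "Z \<in> Zspace T T" and A: "A \<in> sets (filt T t)" for t Z A
  proof
    fix \<omega>
    have AT: "A \<in> sets (filt T T)" using A filt_sub[of t T] t unfolding subalgebra_def by auto
    have Apc: "A \<subseteq> pc_paths 0 T" using sets.sets_into_space[OF A] space_filt by metis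
    have AZ: "(\<lambda>\<omega>. indicator A \<omega> * Z \<omega>) \<in> Zspace T T"
    proof -
      obtain B where B: "\<forall>\<omega>. \<bar>Z \<omega>\<bar> \<le> B" using Z unfolding Zspace_def by blast
      have "\<forall>\<omega>. \<bar>indicator A \<omega> * Z \<omega>\<bar> \<le> \<bar>B\<bar>"
        using B by (auto simp: indicator_def) (smt (verit))
      moreover have "(\<lambda>\<omega>. indicator A \<omega> * Z \<omega>) \<in> borel_measurable (filt T T)"
        using Z AT unfolding Zspace_def by (intro borel_measurable_times borel_measurable_indicator) auto
      moreover have "\<forall>\<omega>. \<omega> \<notin> pc_paths 0 T \<longrightarrow> indicator A \<omega> * Z \<omega> = 0"
        using Z unfolding Zspace_def by auto
      ultimately show ?thesis unfolding Zspace_def by blast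
    qed
    have sp: "space (P t T (\<omega> t)) = path_space t T (\<omega> t)"
      using assms(4) t unfolding chain_law_def by auto
    show "\<rho> t (\<lambda>\<omega>. indicator A \<omega> * Z \<omega>) \<omega> = indicator A \<omega> * \<rho> t Z \<omega>"
    proof (cases "\<omega> \<in> pc_paths 0 T")
      case False
      then show ?thesis using zero_out t Z AZ Apc by (auto simp: indicator_def)
    next
      case True
      show ?thesis
      proof (cases "\<omega> \<in> A")
        case inA: True
        have eq: "\<rho> T (\<lambda>\<omega>. indicator A \<omega> * Z \<omega>) (glue t \<omega> \<eta>) = \<rho> T Z (glue t \<omega> \<eta>)"
          if "\<eta> \<in> space (P t T (\<omega> t))" for \<eta>
        proof -
          have et: "\<eta> t = \<omega> t" using that sp unfolding path_space_def by auto
          have "indicator A (glue t \<omega> \<eta>) * Z (glue t \<omega> \<eta>) = Z (glue t \<omega> \<eta>)"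
          proof (cases "glue t \<omega> \<eta> \<in> pc_paths 0 T")
            case True
            have "\<forall>s\<in>{0..t}. \<omega> s = glue t \<omega> \<eta> s" using et unfolding glue_def by auto
            then have "glue t \<omega> \<eta> \<in> A" using filt_local[OF A \<open>\<omega> \<in> pc_paths 0 T\<close> True] inA by blast
            then show ?thesis by simp
          next
            case False
            then show ?thesis using Z unfolding Zspace_def by auto
          qed
          then show ?thesis using idT Z AZ by simp
        qed
        have a: "\<rho> t (\<lambda>\<omega>. indicator A \<omega> * Z \<omega>) \<omega> \<le> \<rho> t Z \<omega>"
          using sc t True AZ Z st_le_eq[of "P t T (\<omega> t)", OF eq] by auto
        have b: "\<rho> t Z \<omega> \<le> \<rho> t (\<lambda>\<omega>. indicator A \<omega> * Z \<omega>) \<omega>"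
          using sc t True AZ Z st_le_eq[of "P t T (\<omega> t)", OF eq[symmetric]] by auto
        show ?thesis using a b inA by simp
      next
        case nA: False
        have eq: "\<rho> T (\<lambda>\<omega>. indicator A \<omega> * Z \<omega>) (glue t \<omega> \<eta>) = \<rho> T (\<lambda>_. 0) (glue t \<omega> \<eta>)"
          if "\<eta> \<in> space (P t T (\<omega> t))" for \<eta>
        proof -
          have et: "\<eta> t = \<omega> t" using that sp unfolding path_space_def by auto
          have "indicator A (glue t \<omega> \<eta>) * Z (glue t \<omega> \<eta>) = 0"
          proof (cases "glue t \<omega> \<eta> \<in> pc_paths 0 T")
            case True
            have "\<forall>s\<in>{0..t}. \<omega> s = glue t \<omega> \<eta> s" using et unfolding glue_def by auto
            then have "glue t \<omega> \<eta> \<notin> A" using filt_local[OF A \<open>\<omega> \<in> pc_paths 0 T\<close> True] nA by blast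
            then show ?thesis by simp
          next
            case False
            then show ?thesis using Apc by (auto simp: indicator_def)
          qed
          then show ?thesis using idT[OF AZ] idT[OF zero_Z] by simp
        qed
        have s1: "st_le (P t T (\<omega> t)) (\<lambda>\<eta>. \<rho> T (\<lambda>\<omega>. indicator A \<omega> * Z \<omega>) (glue t \<omega> \<eta>))
                 (P t T (\<omega> t)) (\<lambda>\<eta>. \<rho> T (\<lambda>_. 0) (glue t \<omega> \<eta>))"
          by (rule st_le_eq) (rule eq)
        have s2: "st_le (P t T (\<omega> t)) (\<lambda>\<eta>. \<rho> T (\<lambda>_. 0) (glue t \<omega> \<eta>))
                 (P t T (\<omega> t)) (\<lambda>\<eta>. \<rho> T (\<lambda>\<omega>. indicator A \<omega> * Z \<omega>) (glue t \<omega> \<eta>))"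
          by (rule st_le_eq) (rule eq[symmetric])
        have tt: "0 \<le> t" "t \<le> T" using t by auto
        have a: "\<rho> t (\<lambda>\<omega>. indicator A \<omega> * Z \<omega>) \<omega> \<le> \<rho> t (\<lambda>_. 0) \<omega>"
          using sc[rule_format, OF tt order_refl True AZ zero_Z] s1 by blast
        have b: "\<rho> t (\<lambda>_. 0) \<omega> \<le> \<rho> t (\<lambda>\<omega>. indicator A \<omega> * Z \<omega>) \<omega>"
          using sc[rule_format, OF tt order_refl True zero_Z AZ] s2 by blast
        have "\<rho> t (\<lambda>_. 0) \<omega> = 0" using nm t by simp
        then show ?thesis using a b nA by simp
      qed
    qed
  qed
  show ?thesis using part1 part2 by blast
qed

end
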